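(* Let $\tau>0$ and let $\tilde N^E_2,\tilde B_2\in\mathbb{C}^{n_2,n_2}$ be commuting matrices with $\tilde N^E_2$ nilpotent. If $\sigma(\tilde N^E_2,I,\tilde B_2)=\{\lambda\in\mathbb{C}:\det(\lambda\tilde N^E_2-I-e^{-\lambda\tau}\tilde B_2)=0\}\subseteq\mathbb{C}_-=\{\lambda:\mathrm{Re}\,\lambda<0\}$, then every eigenvalue of $\tilde B_2$ has modulus strictly less than $1$. Consequently, there exists a norm on $\mathbb{C}^{n_2}$ whose induced matrix norm satisfies $\|\tilde B_2\|<1$. *)

theory Defs
  imports Complex_Main "Jordan_Normal_Form.Jordan_Normal_Form"
begin

definition is_vec_norm :: "nat \<Rightarrow> (complex vec \<Rightarrow> real) \<Rightarrow> bool" where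
  "is_vec_norm n N \<longleftrightarrow>
     (\<forall>v\<in>carrier_vec n. 0 \<le> N v \<and> (N v = 0 \<longleftrightarrow> v = 0\<^sub>v n)) \<and>
     (\<forall>c. \<forall>v\<in>carrier_vec n. N (c \<cdot>\<^sub>v v) = cmod c * N v) \<and>
     (\<forall>u\<in>carrier_vec n. \<forall>v\<in>carrier_vec n. N (u + v) \<le> N u + N v)"

text \<open>Matrix norm induced by the vector norm N (sup over unit vectors; 0 if n = 0).\<close>
definition induced_mat_norm :: "nat \<Rightarrow> (complex vec \<Rightarrow> real) \<Rightarrow> complex mat \<Rightarrow> real" where
  "induced_mat_norm n N A = Sup (insert 0 {N (A *\<^sub>v v) | v. v \<in> carrier_vec n \<and> N v = 1})"

end

theory Submission
  imports Defs "Jordan_Normal_Form.Spectral_Radius"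
begin

lemma pow_commute:
  assumes A: "A \<in> carrier_mat n n" and C: "C \<in> carrier_mat n n" and AC: "A * C = C * A"
  shows "A ^\<^sub>m k * C = C * A ^\<^sub>m k"
proof (induction k)
  case 0 then show ?case using A C by simp
next
  case (Suc k)
  have "A ^\<^sub>m Suc k * C = A ^\<^sub>m k * (A * C)" using A C by (simp add: assoc_mult_mat[of _ n n _ n _ n])
  also have "\<dots> = (A ^\<^sub>m k * C) * A" using A C AC by (simp add: assoc_mult_mat[of _ n n _ n _ n])
  also have "\<dots> = C * A ^\<^sub>m Suc k" using A C Suc by (simp add: assoc_mult_mat[of _ n n _ n _ n])
  finally show ?case .
qed

lemma pow_Suc_left:
  assumes A: "A \<in> carrier_mat n n"
  shows "A ^\<^sub>m Suc k = A * A ^\<^sub>m k"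
  using pow_commute[OF A A refl, of k] by simp

lemma smult_pow:
  assumes A: "(A :: 'a :: comm_ring_1 mat) \<in> carrier_mat n n"
  shows "(c \<cdot>\<^sub>m A) ^\<^sub>m k = c ^ k \<cdot>\<^sub>m (A ^\<^sub>m k)"
proof (induction k)
  case 0 then show ?case using A by (auto simp: one_mat_def smult_mat_def)
next
  case (Suc k)
  have P: "A ^\<^sub>m k \<in> carrier_mat n n" using A by simp
  have "(c \<cdot>\<^sub>m A) ^\<^sub>m Suc k = (c ^ k \<cdot>\<^sub>m A ^\<^sub>m k) * (c \<cdot>\<^sub>m A)" using Suc by simp
  also have "\<dots> = c ^ k \<cdot>\<^sub>m (A ^\<^sub>m k * (c \<cdot>\<^sub>m A))" using mult_smult_assoc_mat[OF P smult_carrier_mat[OF A]] by simp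
  also have "\<dots> = c ^ k \<cdot>\<^sub>m (c \<cdot>\<^sub>m (A ^\<^sub>m k * A))" using mult_smult_distrib[OF P A] by simp
  also have "\<dots> = c ^ Suc k \<cdot>\<^sub>m (A ^\<^sub>m Suc k)" by (rule eq_matI) (auto simp: mult.commute mult.left_commute)
  finally show ?case .
qed

lemma common_eigvec:
  fixes N B :: "complex mat"
  assumes N: "N \<in> carrier_mat n n" and B: "B \<in> carrier_mat n n" and NB: "N * B = B * N"
    and nil: "N ^\<^sub>m k = 0\<^sub>m n n" and ev: "eigenvalue B \<mu>"
  shows "\<exists>w. w \<in> carrier_vec n \<and> w \<noteq> 0\<^sub>v n \<and> N *\<^sub>v w = 0\<^sub>v n \<and> B *\<^sub>v w = \<mu> \<cdot>\<^sub>v w"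
proof -
  from ev obtain v where v: "v \<in> carrier_vec n" "v \<noteq> 0\<^sub>v n" "B *\<^sub>v v = \<mu> \<cdot>\<^sub>v v"
    using B unfolding eigenvalue_def eigenvector_def by auto
  have ex: "\<exists>j. N ^\<^sub>m j *\<^sub>v v = 0\<^sub>v n" using nil v by (intro exI[of _ k]) auto
  define m where "m = (LEAST j. N ^\<^sub>m j *\<^sub>v v = 0\<^sub>v n)"
  have m0: "N ^\<^sub>m m *\<^sub>v v = 0\<^sub>v n" unfolding m_def by (rule LeastI_ex[OF ex])
  have "m \<noteq> 0" using m0 v N by auto
  then obtain j where mj: "m = Suc j" by (cases m) auto
  have wne: "N ^\<^sub>m j *\<^sub>v v \<noteq> 0\<^sub>v n"
  proof
    assume "N ^\<^sub>m j *\<^sub>v v = 0\<^sub>v n"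
    from Least_le[of "\<lambda>j. N ^\<^sub>m j *\<^sub>v v = 0\<^sub>v n", OF this] show False using mj m_def by simp
  qed
  show ?thesis
  proof (intro exI[of _ "N ^\<^sub>m j *\<^sub>v v"] conjI wne)
    show "N ^\<^sub>m j *\<^sub>v v \<in> carrier_vec n" using N v by (metis mult_mat_vec_carrier pow_carrier_mat)
    have "N *\<^sub>v (N ^\<^sub>m j *\<^sub>v v) = (N * N ^\<^sub>m j) *\<^sub>v v" using assoc_mult_mat_vec[of N n n "N ^\<^sub>m j" n v] N v by simp
    also have "\<dots> = N ^\<^sub>m m *\<^sub>v v" using pow_Suc_left[OF N] mj by simp
    finally show "N *\<^sub>v (N ^\<^sub>m j *\<^sub>v v) = 0\<^sub>v n" using m0 by simp
    have "B *\<^sub>v (N ^\<^sub>m j *\<^sub>v v) = (B * N ^\<^sub>m j) *\<^sub>v v" using assoc_mult_mat_vec[of B n n "N ^\<^sub>m j" n v] N B v by simp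
    also have "\<dots> = (N ^\<^sub>m j * B) *\<^sub>v v" using pow_commute[OF N B NB] by simp
    also have "\<dots> = N ^\<^sub>m j *\<^sub>v (\<mu> \<cdot>\<^sub>v v)" using assoc_mult_mat_vec[of "N ^\<^sub>m j" n n B n v] N B v by simp
    also have "\<dots> = \<mu> \<cdot>\<^sub>v (N ^\<^sub>m j *\<^sub>v v)" using mult_mat_vec[OF pow_carrier_mat[OF N] v(1)] by simp
    finally show "B *\<^sub>v (N ^\<^sub>m j *\<^sub>v v) = \<mu> \<cdot>\<^sub>v (N ^\<^sub>m j *\<^sub>v v)" .
  qed
qed

lemma smult_mat_vec:
  assumes "A \<in> carrier_mat n m" "v \<in> carrier_vec m"
  shows "((c::'a::comm_ring_1) \<cdot>\<^sub>m A) *\<^sub>v v = c \<cdot>\<^sub>v (A *\<^sub>v v)"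
  using assms by (intro eq_vecI) (auto simp: scalar_prod_def sum_distrib_left mult.assoc)

lemma part1:
  fixes \<tau> :: real and n :: nat and N B :: "complex mat"
  assumes "\<tau> > 0"
    and N: "N \<in> carrier_mat n n" and B: "B \<in> carrier_mat n n"
    and NB: "N * B = B * N"
    and nil: "\<exists>k. N ^\<^sub>m k = 0\<^sub>m n n"
    and sp: "{z. det (z \<cdot>\<^sub>m N - 1\<^sub>m n - exp (- z * complex_of_real \<tau>) \<cdot>\<^sub>m B) = 0}
           \<subseteq> {z. Re z < 0}"
    and ev: "eigenvalue B \<mu>"
  shows "cmod \<mu> < 1"
proof (rule ccontr)
  assume "\<not> cmod \<mu> < 1"
  hence mu1: "cmod \<mu> \<ge> 1" by simp
  hence mu0: "\<mu> \<noteq> 0" by auto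
  from nil obtain k where k: "N ^\<^sub>m k = 0\<^sub>m n n" by auto
  from common_eigvec[OF N B NB k ev] obtain w where w: "w \<in> carrier_vec n" "w \<noteq> 0\<^sub>v n"
    "N *\<^sub>v w = 0\<^sub>v n" "B *\<^sub>v w = \<mu> \<cdot>\<^sub>v w" by auto
  define a where "a = - 1 / \<mu>"
  have a0: "a \<noteq> 0" using mu0 unfolding a_def by simp
  define ww where "ww = Complex (ln (cmod a)) (Arg a)"
  have ew: "exp ww = a" unfolding ww_def using a0
    by (subst exp_eq_polar) (metis complex.sel(1) complex.sel(2) exp_ln rcis_cmod_Arg rcis_def zero_less_norm_iff)
  define z where "z = - ww / complex_of_real \<tau>"
  have ez: "exp (- z * complex_of_real \<tau>) = a" unfolding z_def using ew \<open>\<tau> > 0\<close> by simp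
  have "Re z = - ln (cmod a) / \<tau>" unfolding z_def ww_def by (simp add: Re_divide_of_real)
  moreover have "cmod a \<le> 1" using mu1 unfolding a_def by (simp add: norm_divide divide_le_eq_1)
  hence "ln (cmod a) \<le> 0" using a0 by simp
  ultimately have rez: "Re z \<ge> 0" using \<open>\<tau> > 0\<close> by (simp add: divide_nonpos_pos)
  define M where "M = z \<cdot>\<^sub>m N - 1\<^sub>m n - exp (- z * complex_of_real \<tau>) \<cdot>\<^sub>m B"
  have M: "M \<in> carrier_mat n n" unfolding M_def using N B by auto
  have "M *\<^sub>v w = (z \<cdot>\<^sub>m N - 1\<^sub>m n) *\<^sub>v w - (a \<cdot>\<^sub>m B) *\<^sub>v w"
    unfolding M_def ez using N B w by (subst minus_mult_distrib_mat_vec[of _ n n]) auto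
  also have "\<dots> = z \<cdot>\<^sub>v (N *\<^sub>v w) - w - a \<cdot>\<^sub>v (B *\<^sub>v w)"
    using N B w by (subst minus_mult_distrib_mat_vec[of _ n n]) (auto simp: smult_mat_vec)
  also have "\<dots> = 0\<^sub>v n"
    using w mu0 unfolding a_def by (intro eq_vecI) auto
  finally have "M *\<^sub>v w = 0\<^sub>v n" .
  hence "det M = 0" using det_0_iff_vec_prod_zero[OF M] w by auto
  hence "Re z < 0" using sp unfolding M_def by auto
  with rez show False by simp
qed

lemma decay:
  fixes B :: "complex mat"
  assumes B: "B \<in> carrier_mat n n" and ev: "\<And>\<mu>. eigenvalue B \<mu> \<Longrightarrow> cmod \<mu> < 1"
  shows "\<exists>r c. 0 < r \<and> r < 1 \<and> (\<forall>k. norm_bound (B ^\<^sub>m k) (c * r ^ k))"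
proof (cases "n = 0")
  case True
  then show ?thesis using B by (intro exI[of _ "1/2"] exI[of _ 0]) (auto simp: norm_bound_def)
next
  case False
  hence n: "n > 0" by simp
  define \<rho> where "\<rho> = spectral_radius B"
  from spectral_radius_mem_max(1)[OF B n] obtain \<mu> where mu: "\<mu> \<in> spectrum B" "\<rho> = cmod \<mu>"
    unfolding \<rho>_def by auto
  have rho1: "\<rho> < 1" using mu ev unfolding spectrum_def by auto
  have rho0: "\<rho> \<ge> 0" using mu by auto
  define r where "r = (1 + \<rho>) / 2"
  have r0: "r > 0" and r1: "r < 1" and rr: "\<rho> < r" using rho0 rho1 unfolding r_def by auto
  define C where "C = complex_of_real (1/r) \<cdot>\<^sub>m B"
  have C: "C \<in> carrier_mat n n" unfolding C_def using B by simp
  have srC: "spectral_radius C < 1"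
  proof -
    from spectral_radius_mem_max(1)[OF C n] obtain \<nu> where nu: "\<nu> \<in> spectrum C" "spectral_radius C = cmod \<nu>"
      by auto
    from nu(1) obtain v where v: "v \<in> carrier_vec n" "v \<noteq> 0\<^sub>v n" "C *\<^sub>v v = \<nu> \<cdot>\<^sub>v v"
      unfolding spectrum_def eigenvalue_def eigenvector_def using C by auto
    have "B *\<^sub>v v = complex_of_real r \<cdot>\<^sub>v (C *\<^sub>v v)"
      unfolding C_def using B v r0 by (subst smult_mat_vec[OF B v(1)]) (auto intro!: eq_vecI)
    also have "\<dots> = (complex_of_real r * \<nu>) \<cdot>\<^sub>v v" using v by (auto intro!: eq_vecI)
    finally have "eigenvalue B (complex_of_real r * \<nu>)"
      unfolding eigenvalue_def eigenvector_def using v B by auto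
    hence "cmod (complex_of_real r * \<nu>) \<le> \<rho>" unfolding \<rho>_def
      by (intro spectral_radius_mem_max(2)[OF B n]) (auto simp: spectrum_def)
    hence "r * cmod \<nu> \<le> \<rho>" using r0 by (simp add: norm_mult)
    hence "r * cmod \<nu> < r * 1" using rr by simp
    hence "cmod \<nu> < 1" using r0 by (simp only: mult_less_cancel_left_pos)
    thus ?thesis using nu by simp
  qed
  from spectral_radius_jnf_norm_bound_less_1[OF C srC]
  obtain c where c: "\<forall>k. norm_bound (C ^\<^sub>m k) c"
    using char_poly_factorized[OF C] jordan_nf_exists[OF C] by blast
  have "\<forall>k. norm_bound (B ^\<^sub>m k) (c * r ^ k)"
  proof
    fix k
    show "norm_bound (B ^\<^sub>m k) (c * r ^ k)"
    unfolding norm_bound_def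
    proof (intro allI impI)
      fix i j assume ij: "i < dim_row (B ^\<^sub>m k)" "j < dim_col (B ^\<^sub>m k)"
      show "norm ((B ^\<^sub>m k) $$ (i,j)) \<le> c * r ^ k"
      proof -
      have "C ^\<^sub>m k = complex_of_real (1/r) ^ k \<cdot>\<^sub>m B ^\<^sub>m k" unfolding C_def by (rule smult_pow[OF B])
      with c have "norm_bound (complex_of_real (1/r) ^ k \<cdot>\<^sub>m B ^\<^sub>m k) c" by metis
      hence "cmod ((complex_of_real (1/r) ^ k \<cdot>\<^sub>m B ^\<^sub>m k) $$ (i,j)) \<le> c"
        using ij unfolding norm_bound_def by auto
      hence "(1/r) ^ k * cmod ((B ^\<^sub>m k) $$ (i,j)) \<le> c" using ij r0
        by (simp add: norm_mult norm_power norm_divide)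
      hence "cmod ((B ^\<^sub>m k) $$ (i,j)) \<le> c * r ^ k" using r0
        by (simp add: power_divide field_simps)
      thus ?thesis by simp
      qed
    qed
  qed
  thus ?thesis using r0 r1 by blast
qed

definition vn1 :: "nat \<Rightarrow> complex vec \<Rightarrow> real" where
  "vn1 n v = (\<Sum>i<n. cmod (v $ i))"

lemma vn1_nonneg: "vn1 n v \<ge> 0"
  unfolding vn1_def by (intro sum_nonneg) auto

lemma vn1_zero_iff:
  assumes "v \<in> carrier_vec n" shows "vn1 n v = 0 \<longleftrightarrow> v = 0\<^sub>v n"
proof
  assume "vn1 n v = 0"
  hence "\<forall>i\<in>{..<n}. cmod (v $ i) = 0" unfolding vn1_def by (subst sum_nonneg_eq_0_iff[symmetric]) auto
  thus "v = 0\<^sub>v n" using assms by (intro eq_vecI) auto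
next
  assume "v = 0\<^sub>v n" thus "vn1 n v = 0" unfolding vn1_def by simp
qed

lemma vn1_smult:
  assumes "v \<in> carrier_vec n" shows "vn1 n (a \<cdot>\<^sub>v v) = cmod a * vn1 n v"
  using assms unfolding vn1_def by (auto simp: sum_distrib_left norm_mult)

lemma vn1_add:
  assumes "u \<in> carrier_vec n" "v \<in> carrier_vec n" shows "vn1 n (u + v) \<le> vn1 n u + vn1 n v"
  using assms unfolding vn1_def sum.distrib[symmetric] by (intro sum_mono) (auto simp: norm_triangle_ineq)

lemma vn1_mat:
  assumes A: "A \<in> carrier_mat n n" and D: "\<And>i j. i < n \<Longrightarrow> j < n \<Longrightarrow> cmod (A $$ (i,j)) \<le> D"
    and v: "v \<in> carrier_vec n"
  shows "vn1 n (A *\<^sub>v v) \<le> real n * D * vn1 n v"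
proof -
  have each: "cmod ((A *\<^sub>v v) $ i) \<le> D * vn1 n v" if i: "i < n" for i
  proof -
    have "(A *\<^sub>v v) $ i = (\<Sum>j<n. A $$ (i,j) * v $ j)"
      using A v i by (auto simp: scalar_prod_def lessThan_atLeast0)
    hence "cmod ((A *\<^sub>v v) $ i) \<le> (\<Sum>j<n. cmod (A $$ (i,j)) * cmod (v $ j))"
      by (auto intro: order.trans[OF norm_sum] simp: norm_mult)
    also have "\<dots> \<le> (\<Sum>j<n. D * cmod (v $ j))"
      using D i by (intro sum_mono mult_right_mono) auto
    finally show ?thesis unfolding vn1_def by (simp add: sum_distrib_left)
  qed
  have "vn1 n (A *\<^sub>v v) \<le> (\<Sum>i<n. D * vn1 n v)"
    unfolding vn1_def[of n "A *\<^sub>v v"] using each by (intro sum_mono) auto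
  thus ?thesis by simp
qed

lemma norm_construct:
  fixes B :: "complex mat"
  assumes B: "B \<in> carrier_mat n n" and r0: "0 < r" and r1: "r < 1"
    and bd: "\<forall>k. norm_bound (B ^\<^sub>m k) (c * r ^ k)"
  shows "\<exists>Nrm. is_vec_norm n Nrm \<and> induced_mat_norm n Nrm B < 1"
proof -
  have bdk: "cmod ((B ^\<^sub>m k) $$ (i,j)) \<le> c * r ^ k" if "i < n" "j < n" for i j k
    using bd that B unfolding norm_bound_def by auto
  have bdD: "cmod ((B ^\<^sub>m k) $$ (i,j)) \<le> \<bar>c\<bar>" if "i < n" "j < n" for i j k
  proof -
    have "c * r ^ k \<le> \<bar>c\<bar> * r ^ k" using r0 by (intro mult_right_mono) auto
    also have "\<dots> \<le> \<bar>c\<bar> * 1" using r0 r1 by (intro mult_left_mono power_le_one) auto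
    finally show ?thesis using bdk[OF that, of k] by simp
  qed
  define E where "E = real n * \<bar>c\<bar>"
  have E0: "E \<ge> 0" unfolding E_def by simp
  obtain K where K: "r ^ K < 1 / (2 * (E + 1))"
    using real_arch_pow_inv[of "1 / (2 * (E + 1))" r] E0 r1 by auto
  define L where "L = Suc K"
  have EK: "E * r ^ L \<le> 1/2"
  proof -
    have "r ^ L \<le> r ^ K" unfolding L_def using r0 r1 by (simp add: power_decreasing)
    hence "E * r ^ L \<le> (E + 1) * r ^ K" using E0 r0 by (intro mult_mono) auto
    also have "\<dots> \<le> (E + 1) * (1 / (2 * (E + 1)))" using K E0 by (intro mult_left_mono) auto
    also have "\<dots> = 1/2" using E0 by simp
    finally show ?thesis .
  qed
  define Nrm where "Nrm v = (\<Sum>k<L. vn1 n (B ^\<^sub>m k *\<^sub>v v))" for v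
  define M where "M = real L * E + 1"
  have M1: "M \<ge> 1" unfolding M_def using E0 by simp
  have Bk: "B ^\<^sub>m k \<in> carrier_mat n n" for k using B by simp
  have lowb: "vn1 n v \<le> Nrm v" if v: "v \<in> carrier_vec n" for v
  proof -
    have "vn1 n v = vn1 n (B ^\<^sub>m 0 *\<^sub>v v)" using B v by simp
    also have "\<dots> \<le> Nrm v" unfolding Nrm_def L_def
      by (rule member_le_sum) (auto simp: vn1_nonneg)
    finally show ?thesis .
  qed
  have upb: "Nrm v \<le> M * vn1 n v" if v: "v \<in> carrier_vec n" for v
  proof -
    have "Nrm v \<le> (\<Sum>k<L. E * vn1 n v)" unfolding Nrm_def E_def
      using vn1_mat[OF Bk bdD v] by (intro sum_mono) (simp add: mult.assoc)
    also have "\<dots> \<le> M * vn1 n v" unfolding M_def using vn1_nonneg[of n v] E0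
      by (simp add: distrib_right)
    finally show ?thesis .
  qed
  have contr: "Nrm (B *\<^sub>v v) \<le> (1 - 1 / (2 * M)) * Nrm v" if v: "v \<in> carrier_vec n" for v
  proof -
    have sh: "B ^\<^sub>m k *\<^sub>v (B *\<^sub>v v) = B ^\<^sub>m Suc k *\<^sub>v v" for k
      using B v Bk[of k] by (simp add: assoc_mult_mat_vec[symmetric, of _ n n _ n])
    have "Nrm (B *\<^sub>v v) = (\<Sum>k<L. vn1 n (B ^\<^sub>m Suc k *\<^sub>v v))" unfolding Nrm_def sh ..
    also have "\<dots> = Nrm v - vn1 n v + vn1 n (B ^\<^sub>m L *\<^sub>v v)"
    proof -
      have "(\<Sum>k<Suc L. vn1 n (B ^\<^sub>m k *\<^sub>v v)) = vn1 n (B ^\<^sub>m 0 *\<^sub>v v) + (\<Sum>k<L. vn1 n (B ^\<^sub>m Suc k *\<^sub>v v))"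
        by (rule sum.lessThan_Suc_shift)
      moreover have "(\<Sum>k<Suc L. vn1 n (B ^\<^sub>m k *\<^sub>v v)) = Nrm v + vn1 n (B ^\<^sub>m L *\<^sub>v v)"
        unfolding Nrm_def by simp
      moreover have "B ^\<^sub>m 0 *\<^sub>v v = v" using B v by simp
      ultimately show ?thesis by simp
    qed
    also have "vn1 n (B ^\<^sub>m L *\<^sub>v v) \<le> real n * (c * r ^ L) * vn1 n v"
      by (rule vn1_mat[OF Bk _ v]) (rule bdk)
    also have "real n * (c * r ^ L) \<le> E * r ^ L" unfolding E_def using r0
      by (simp add: mult.assoc mult_left_mono mult_right_mono)
    hence "real n * (c * r ^ L) * vn1 n v \<le> 1/2 * vn1 n v"
      using EK vn1_nonneg[of n v] by (intro mult_right_mono) auto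
    finally have "Nrm (B *\<^sub>v v) \<le> Nrm v - vn1 n v / 2" by simp
    also have "vn1 n v \<ge> Nrm v / M" using upb[OF v] M1 by (simp add: divide_le_eq mult.commute)
    hence "Nrm v - vn1 n v / 2 \<le> Nrm v - Nrm v / (2 * M)" by simp
    also have "\<dots> = (1 - 1 / (2 * M)) * Nrm v" by (simp add: algebra_simps)
    finally show ?thesis .
  qed
  define q where "q = 1 - 1 / (2 * M)"
  have q0: "q \<ge> 0" and q1: "q < 1" unfolding q_def using M1 by (auto simp: field_simps)
  have norm: "is_vec_norm n Nrm"
    unfolding is_vec_norm_def
  proof (intro conjI ballI allI)
    fix v :: "complex vec" assume v: "v \<in> carrier_vec n"
    show "0 \<le> Nrm v" unfolding Nrm_def by (intro sum_nonneg) (auto simp: vn1_nonneg)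
    show "Nrm v = 0 \<longleftrightarrow> v = 0\<^sub>v n"
    proof
      assume "Nrm v = 0"
      hence "vn1 n v \<le> 0" using lowb[OF v] by simp
      hence "vn1 n v = 0" using vn1_nonneg[of n v] by simp
      thus "v = 0\<^sub>v n" using vn1_zero_iff[OF v] by simp
    next
      assume "v = 0\<^sub>v n"
      have "B ^\<^sub>m k *\<^sub>v 0\<^sub>v n = 0\<^sub>v n" for k
        using B by (intro eq_vecI) (auto simp: scalar_prod_def intro!: sum.neutral)
      thus "Nrm v = 0" unfolding Nrm_def using \<open>v = 0\<^sub>v n\<close> by (auto simp: vn1_def)
    qed
  next
    fix a :: complex and v :: "complex vec" assume v: "v \<in> carrier_vec n"
    have "B ^\<^sub>m k *\<^sub>v (a \<cdot>\<^sub>v v) = a \<cdot>\<^sub>v (B ^\<^sub>m k *\<^sub>v v)" for k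
      by (rule mult_mat_vec[OF Bk v])
    thus "Nrm (a \<cdot>\<^sub>v v) = cmod a * Nrm v" unfolding Nrm_def
      using vn1_smult[OF mult_mat_vec_carrier[OF Bk v], of a] by (simp add: sum_distrib_left)
  next
    fix u v :: "complex vec" assume u: "u \<in> carrier_vec n" and v: "v \<in> carrier_vec n"
    have "B ^\<^sub>m k *\<^sub>v (u + v) = B ^\<^sub>m k *\<^sub>v u + B ^\<^sub>m k *\<^sub>v v" for k
      by (rule mult_add_distrib_mat_vec[OF Bk u v])
    hence "Nrm (u + v) \<le> (\<Sum>k<L. vn1 n (B ^\<^sub>m k *\<^sub>v u) + vn1 n (B ^\<^sub>m k *\<^sub>v v))"
      unfolding Nrm_def by (intro sum_mono) (simp add: vn1_add[OF mult_mat_vec_carrier[OF Bk u] mult_mat_vec_carrier[OF Bk v]])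
    thus "Nrm (u + v) \<le> Nrm u + Nrm v" unfolding Nrm_def by (simp add: sum.distrib)
  qed
  have "induced_mat_norm n Nrm B \<le> q"
    unfolding induced_mat_norm_def
  proof (rule cSup_least)
    show "insert 0 {Nrm (B *\<^sub>v v) |v. v \<in> carrier_vec n \<and> Nrm v = 1} \<noteq> {}" by simp
  next
    fix x assume "x \<in> insert 0 {Nrm (B *\<^sub>v v) |v. v \<in> carrier_vec n \<and> Nrm v = 1}"
    then show "x \<le> q" using q0 contr unfolding q_def by fastforce
  qed
  with norm q1 show ?thesis by force
qed

theorem lemma7:
  fixes \<tau> :: real and n :: nat and N B :: "complex mat"
  assumes "\<tau> > 0"
    and "N \<in> carrier_mat n n" and "B \<in> carrier_mat n n"
    and "N * B = B * N"
    and "\<exists>k. N ^\<^sub>m k = 0\<^sub>m n n"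
    and "{z. det (z \<cdot>\<^sub>m N - 1\<^sub>m n - exp (- z * complex_of_real \<tau>) \<cdot>\<^sub>m B) = 0}
           \<subseteq> {z. Re z < 0}"
  shows "(\<forall>\<mu>. eigenvalue B \<mu> \<longrightarrow> cmod \<mu> < 1) \<and>
         (\<exists>Nrm. is_vec_norm n Nrm \<and> induced_mat_norm n Nrm B < 1)"
proof -
  have ev: "\<And>\<mu>. eigenvalue B \<mu> \<Longrightarrow> cmod \<mu> < 1"
    using part1[OF assms] by blast
  from decay[OF assms(3) ev] obtain r c where "0 < r" "r < 1" "\<forall>k. norm_bound (B ^\<^sub>m k) (c * r ^ k)"
    by blast
  from norm_construct[OF assms(3) this] ev show ?thesis by blast
qed

end
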